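(* Let $n\ge 2$ and let $NF_n$ be the complex Leibniz algebra with basis $\{e_1,\dots,e_n\}$ and nonzero products $[e_i,e_1]=e_{i+1}$, $1\le i\le n-1$. Then $\mathrm{Bider}(NF_n)$, with the bracket $[(d,D),(d',D')]=(d\circ d'-d'\circ d,\ D\circ d'-d'\circ D)$, is a solvable Leibniz algebra of dimension $2n-1$.
   Context: All algebras are over $\mathbb C$; Leibniz algebras are right Leibniz: $[x,[y,z]]=[[x,y],z]-[[x,z],y]$. A derivation is a linear map $d$ with $d([x,y])=[d(x),y]+[x,d(y)]$; an anti-derivation is a linear map $D$ with $D([x,y])=[D(x),y]-[D(y),x]$; a biderivation is a pair $(d,D)$ of a derivation and an anti-derivation with $[x,d(y)]=[x,D(y)]$ for all $x,y$. $\mathrm{Bider}(L)$ is the vector space of all biderivations of $L$. A Leibniz algebra $A$ is solvable if the derived series $A^{[1]}=A$, $A^{[s+1]}=[A^{[s]},A^{[s]}]$ reaches $0$. *)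

theory Defs
  imports Complex_Main "HOL-Library.Function_Algebras" "HOL-Library.Product_Plus"
begin

definition leibniz_algebra_on ::
  "('k::field \<Rightarrow> 'v::ab_group_add \<Rightarrow> 'v) \<Rightarrow> ('v \<Rightarrow> 'v \<Rightarrow> 'v) \<Rightarrow> 'v set \<Rightarrow> bool" where
  "leibniz_algebra_on s br A \<longleftrightarrow>
     vector_space s \<and> module.subspace s A \<and>
     (\<forall>x\<in>A. \<forall>y\<in>A. br x y \<in> A) \<and>
     (\<forall>x\<in>A. \<forall>y\<in>A. \<forall>z\<in>A. br (x + y) z = br x z + br y z \<and> br z (x + y) = br z x + br z y) \<and>
     (\<forall>c. \<forall>x\<in>A. \<forall>y\<in>A. br (s c x) y = s c (br x y) \<and> br x (s c y) = s c (br x y)) \<and>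
     (\<forall>x\<in>A. \<forall>y\<in>A. \<forall>z\<in>A. br x (br y z) = br (br x y) z - br (br x z) y)"

text \<open>Derived series: index 0 here is A^[1] = A of the paper;
  A^[s+1] = [A^[s],A^[s]] (the linear span of all brackets).\<close>

fun derived_series ::
  "('k::field \<Rightarrow> 'v::ab_group_add \<Rightarrow> 'v) \<Rightarrow> ('v \<Rightarrow> 'v \<Rightarrow> 'v) \<Rightarrow> 'v set \<Rightarrow> nat \<Rightarrow> 'v set" where
  "derived_series s br A 0 = A"
| "derived_series s br A (Suc k) =
     module.span s {br x y | x y. x \<in> derived_series s br A k \<and> y \<in> derived_series s br A k}"

definition solvable_on ::
  "('k::field \<Rightarrow> 'v::ab_group_add \<Rightarrow> 'v) \<Rightarrow> ('v \<Rightarrow> 'v \<Rightarrow> 'v) \<Rightarrow> 'v set \<Rightarrow> bool" where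
  "solvable_on s br A \<longleftrightarrow> (\<exists>k. derived_series s br A k = {0})"

text \<open>Vectors of C^n are functions nat => complex vanishing at indices \<ge> n;
  the basis vector e_(i+1) of the paper is the i-th unit vector (0-indexed).
  Linear endomorphisms of C^n are represented by n x n matrices
  (functions nat => nat => complex vanishing outside {0..<n} x {0..<n}).\<close>

type_synonym cmat = "nat \<Rightarrow> nat \<Rightarrow> complex"

definition vecs :: "nat \<Rightarrow> (nat \<Rightarrow> complex) set" where
  "vecs n = {v. \<forall>i\<ge>n. v i = 0}"

definition unitv :: "nat \<Rightarrow> nat \<Rightarrow> complex" where
  "unitv i = (\<lambda>k. if k = i then 1 else 0)"

definition is_mat :: "nat \<Rightarrow> cmat \<Rightarrow> bool" where
  "is_mat n A \<longleftrightarrow> (\<forall>i j. n \<le> i \<or> n \<le> j \<longrightarrow> A i j = 0)"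

definition mat_app :: "nat \<Rightarrow> cmat \<Rightarrow> (nat \<Rightarrow> complex) \<Rightarrow> (nat \<Rightarrow> complex)" where
  "mat_app n A v = (\<lambda>i. \<Sum>j<n. A i j * v j)"

definition mat_comp :: "nat \<Rightarrow> cmat \<Rightarrow> cmat \<Rightarrow> cmat" where
  "mat_comp n A B = (\<lambda>i j. \<Sum>k<n. A i k * B k j)"

definition nf_basis_br :: "nat \<Rightarrow> nat \<Rightarrow> nat \<Rightarrow> (nat \<Rightarrow> complex)" where
  "nf_basis_br n i j = (if j = 0 \<and> i + 1 < n then unitv (i + 1) else 0)"

definition nf_br :: "nat \<Rightarrow> (nat \<Rightarrow> complex) \<Rightarrow> (nat \<Rightarrow> complex) \<Rightarrow> (nat \<Rightarrow> complex)" where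
  "nf_br n x y = (\<Sum>i<n. \<Sum>j<n. (\<lambda>k. x i * y j * nf_basis_br n i j k))"

definition is_derivation :: "nat \<Rightarrow> cmat \<Rightarrow> bool" where
  "is_derivation n d \<longleftrightarrow> is_mat n d \<and>
     (\<forall>x\<in>vecs n. \<forall>y\<in>vecs n.
        mat_app n d (nf_br n x y) = nf_br n (mat_app n d x) y + nf_br n x (mat_app n d y))"

definition is_antiderivation :: "nat \<Rightarrow> cmat \<Rightarrow> bool" where
  "is_antiderivation n D \<longleftrightarrow> is_mat n D \<and>
     (\<forall>x\<in>vecs n. \<forall>y\<in>vecs n.
        mat_app n D (nf_br n x y) = nf_br n (mat_app n D x) y - nf_br n (mat_app n D y) x)"

definition Bider :: "nat \<Rightarrow> (cmat \<times> cmat) set" where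
  "Bider n = {(d, D). is_derivation n d \<and> is_antiderivation n D \<and>
     (\<forall>x\<in>vecs n. \<forall>y\<in>vecs n. nf_br n x (mat_app n d y) = nf_br n x (mat_app n D y))}"

definition pscale :: "complex \<Rightarrow> cmat \<times> cmat \<Rightarrow> cmat \<times> cmat" where
  "pscale c p = (\<lambda>i j. c * fst p i j, \<lambda>i j. c * snd p i j)"

definition bider_br :: "nat \<Rightarrow> cmat \<times> cmat \<Rightarrow> cmat \<times> cmat \<Rightarrow> cmat \<times> cmat" where
  "bider_br n p q =
     (mat_comp n (fst p) (fst q) - mat_comp n (fst q) (fst p),
      mat_comp n (snd p) (fst q) - mat_comp n (fst q) (snd p))"

end

theory Submission
  imports Defs
begin

lemma sum_fun_apply: "(sum f A) x = (\<Sum>a\<in>A. f a x)"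
  by (induction A rule: infinite_finite_induct) auto

lemma nf_basis_br_apply: "nf_basis_br n i j k = (if j = 0 \<and> i + 1 < n \<and> k = i + 1 then 1 else 0)"
  by (auto simp: nf_basis_br_def unitv_def)

lemma nf_br_closed:
  assumes "0 < n"
  shows "nf_br n x y = (\<lambda>k. if 0 < k \<and> k < n then x (k - 1) * y 0 else 0)"
proof
  fix k
  have "nf_br n x y k = (\<Sum>i<n. \<Sum>j<n. x i * y j * nf_basis_br n i j k)"
    by (simp add: nf_br_def sum_fun_apply)
  also have "\<dots> = (\<Sum>i<n. if i = k - 1 \<and> 0 < k \<and> k < n then x i * y 0 else 0)"
    apply (rule sum.cong[OF refl])
    using assms by (auto simp: nf_basis_br_apply if_distrib cong: if_cong intro!: sum.neutral)
  also have "\<dots> = (if 0 < k \<and> k < n then x (k - 1) * y 0 else 0)"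
    by (auto simp: sum.delta)
  finally show "nf_br n x y k = (if 0 < k \<and> k < n then x (k - 1) * y 0 else 0)" .
qed


definition mkd :: "nat \<Rightarrow> (nat \<Rightarrow> complex) \<Rightarrow> cmat" where
  "mkd n c = (\<lambda>x y. if y < x \<and> x < n then c (x - y) else if x = y \<and> x < n then of_nat (Suc y) * c 0 else 0)"

definition mkD :: "nat \<Rightarrow> (nat \<Rightarrow> complex) \<Rightarrow> cmat" where
  "mkD n b = (\<lambda>x y. if y = 0 \<and> x < n then b x else 0)"

lemma unitv_vecs: "j < n \<Longrightarrow> unitv j \<in> vecs n"
  by (auto simp: vecs_def unitv_def)

lemma mat_app_unitv: "j < n \<Longrightarrow> mat_app n d (unitv j) = (\<lambda>i. d i j)"
  by (auto simp: mat_app_def unitv_def if_distrib cong: if_cong)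

lemma mat_app_apply: "mat_app n d v i = (\<Sum>j<n. d i j * v j)"
  by (simp add: mat_app_def)

lemma der_rel:
  assumes "is_derivation n d" "2 \<le> n" "Suc p < n"
  shows "d i (Suc p) = (if 0 < i \<and> i < n then d (i - 1) p + (if i - 1 = p then d 0 0 else 0) else 0)"
proof -
  have "mat_app n d (nf_br n (unitv p) (unitv 0)) i =
        (nf_br n (mat_app n d (unitv p)) (unitv 0) + nf_br n (unitv p) (mat_app n d (unitv 0))) i"
    using assms unitv_vecs[of p n] unitv_vecs[of 0 n] unfolding is_derivation_def by auto
  moreover have "mat_app n d (nf_br n (unitv p) (unitv 0)) i = d i (Suc p)"
  proof -
    have "nf_br n (unitv p) (unitv 0) = unitv (Suc p)"
      using assms by (intro ext) (auto simp: nf_br_closed unitv_def)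
    then show ?thesis using assms by (simp add: mat_app_unitv)
  qed
  moreover have "(nf_br n (mat_app n d (unitv p)) (unitv 0) + nf_br n (unitv p) (mat_app n d (unitv 0))) i
     = (if 0 < i \<and> i < n then d (i - 1) p + (if i - 1 = p then d 0 0 else 0) else 0)"
    using assms by (simp add: nf_br_closed mat_app_unitv[of p] mat_app_unitv[of 0]) (simp add: unitv_def)
  ultimately show ?thesis by simp
qed


lemma der_form:
  assumes "is_derivation n d" "2 \<le> n"
  shows "d = mkd n (\<lambda>i. d i 0)"
proof -
  have m: "is_mat n d" using assms by (simp add: is_derivation_def)
  have "\<forall>x. d x y = mkd n (\<lambda>i. d i 0) x y" for y
  proof (induction y)
    case 0
    then show ?case using m by (auto simp: mkd_def is_mat_def)
  next
    case (Suc y)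
    show ?case
    proof
      fix x
      show "d x (Suc y) = mkd n (\<lambda>i. d i 0) x (Suc y)"
      proof (cases "Suc y < n")
        case True
        note r = der_rel[OF assms True, of x]
        show ?thesis
        proof (cases "0 < x \<and> x < n")
          case True
          then have ih: "d (x - 1) y = mkd n (\<lambda>i. d i 0) (x - 1) y" using Suc.IH by blast
          consider "x - 1 = y" | "y < x - 1" | "x - 1 < y" by linarith
          then show ?thesis
          proof cases
            case 1
            then have x: "x = Suc y" using True by linarith
            have "d x (Suc y) = d (x - 1) y + d 0 0" using r True 1 by simp
            also have "\<dots> = mkd n (\<lambda>i. d i 0) y y + d 0 0" using ih 1 by simp
            also have "\<dots> = of_nat (Suc (Suc y)) * d 0 0" using True x by (simp add: mkd_def algebra_simps)
            also have "\<dots> = mkd n (\<lambda>i. d i 0) x (Suc y)" using True x by (simp add: mkd_def)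
            finally show ?thesis .
          next
            case 2
            then have e: "x - 1 - y = x - Suc y" "Suc y < x" "x - 1 < n" "x - 1 \<noteq> y" using True by auto
            have "d x (Suc y) = d (x - 1) y" using r True e(4) by simp
            also have "\<dots> = mkd n (\<lambda>i. d i 0) (x - 1) y" by (rule ih)
            also have "\<dots> = d (x - 1 - y) 0" using e(3) 2 by (simp add: mkd_def)
            also have "\<dots> = d (x - Suc y) 0" by (simp only: e(1))
            also have "\<dots> = mkd n (\<lambda>i. d i 0) x (Suc y)" using e True by (simp add: mkd_def)
            finally show ?thesis .
          next
            case 3
            then have e: "\<not> Suc y < x" "x \<noteq> Suc y" "x - 1 \<noteq> y" "\<not> y < x - 1" by auto
            have a: "d x (Suc y) = d (x - 1) y" using r True e by simp
            have b: "mkd n (\<lambda>i. d i 0) x (Suc y) = 0" using e by (simp add: mkd_def)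
            have c: "mkd n (\<lambda>i. d i 0) (x - 1) y = 0" using e by (simp add: mkd_def)
            show ?thesis using a b c ih by simp
          qed
        next
          case False
          then have "d x (Suc y) = 0" by (rule trans[OF r if_not_P])
          moreover have "mkd n (\<lambda>i. d i 0) x (Suc y) = 0" using False by (auto simp: mkd_def)
          ultimately show ?thesis by simp
        qed
      next
        case False
        then show ?thesis using m by (auto simp: mkd_def is_mat_def)
      qed
    qed
  qed
  then show ?thesis by (intro ext) (rule spec)
qed


lemma anti_rel:
  assumes "is_antiderivation n D" "2 \<le> n" "Suc p < n"
  shows "D i (Suc p) = (if 0 < i \<and> i < n then D (i - 1) p - (if p = 0 then D (i - 1) 0 else 0) else 0)"
proof -
  have "mat_app n D (nf_br n (unitv p) (unitv 0)) i =
        (nf_br n (mat_app n D (unitv p)) (unitv 0) - nf_br n (mat_app n D (unitv 0)) (unitv p)) i"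
    using assms unitv_vecs[of p n] unitv_vecs[of 0 n] unfolding is_antiderivation_def by auto
  moreover have "mat_app n D (nf_br n (unitv p) (unitv 0)) i = D i (Suc p)"
  proof -
    have "nf_br n (unitv p) (unitv 0) = unitv (Suc p)"
      using assms by (intro ext) (auto simp: nf_br_closed unitv_def)
    then show ?thesis using assms by (simp add: mat_app_unitv)
  qed
  moreover have "(nf_br n (mat_app n D (unitv p)) (unitv 0) - nf_br n (mat_app n D (unitv 0)) (unitv p)) i
     = (if 0 < i \<and> i < n then D (i - 1) p - (if p = 0 then D (i - 1) 0 else 0) else 0)"
    using assms by (simp add: nf_br_closed mat_app_unitv[of p] mat_app_unitv[of 0]) (simp add: unitv_def)
  ultimately show ?thesis by simp
qed

lemma anti_form:
  assumes "is_antiderivation n D" "2 \<le> n"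
  shows "D = mkD n (\<lambda>i. D i 0)"
proof -
  have m: "\<And>i j. n \<le> i \<or> n \<le> j \<Longrightarrow> D i j = 0" using assms unfolding is_antiderivation_def is_mat_def by blast
  have "0 < y \<longrightarrow> (\<forall>x. D x y = 0)" for y
  proof (induction y)
    case 0
    then show ?case by simp
  next
    case (Suc y)
    show ?case
    proof (intro impI allI)
      fix x
      show "D x (Suc y) = 0"
      proof (cases "Suc y < n")
        case True
        note r = anti_rel[OF assms True, of x]
        show ?thesis
        proof (cases "y = 0")
          case True
          then show ?thesis using r by simp
        next
          case False
          then show ?thesis using r Suc.IH by simp
        qed
      next
        case False
        then show ?thesis using m by simp
      qed
    qed
  qed
  then have z: "\<And>x y. 0 < y \<Longrightarrow> D x y = 0" by blast
  show ?thesis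
  proof (intro ext)
    fix x y
    show "D x y = mkD n (\<lambda>i. D i 0) x y"
      using z[of y x] m[of x y] by (cases "y = 0") (auto simp: mkD_def)
  qed
qed

lemma compat_rel:
  assumes "(d, D) \<in> Bider n" "2 \<le> n"
  shows "d 0 0 = D 0 0"
proof -
  have "nf_br n (unitv 0) (mat_app n d (unitv 0)) 1 = nf_br n (unitv 0) (mat_app n D (unitv 0)) 1"
    using assms unitv_vecs[of 0 n] unfolding Bider_def by auto
  then show ?thesis using assms by (simp add: nf_br_closed mat_app_unitv[of 0 n]) (simp add: unitv_def)
qed

lemma bider_sub:
  assumes "p \<in> Bider n" "2 \<le> n"
  shows "\<exists>c b. p = (mkd n c, mkD n b) \<and> b 0 = c 0"
proof -
  obtain d D where p: "p = (d, D)" by fastforce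
  have "is_derivation n d" "is_antiderivation n D" using assms p by (auto simp: Bider_def)
  then have "d = mkd n (\<lambda>i. d i 0)" "D = mkD n (\<lambda>i. D i 0)" using der_form anti_form assms by blast+
  moreover have "D 0 0 = d 0 0" using compat_rel[of d D n] assms p by simp
  ultimately show ?thesis using p by blast
qed


lemma der_of_rel:
  assumes n: "n = Suc m" and mat: "is_mat n d"
    and R1: "\<And>j. 0 < j \<Longrightarrow> d 0 j = 0"
    and R2: "\<And>i k. 0 < i \<Longrightarrow> i < n \<Longrightarrow> k < m \<Longrightarrow> d i (Suc k) = d (i - 1) k + (if k = i - 1 then d 0 0 else 0)"
    and R3: "\<And>i. i < m \<Longrightarrow> d i m = 0"
  shows "is_derivation n d"
  unfolding is_derivation_def
proof (intro conjI ballI mat ext)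
  fix x y :: "nat \<Rightarrow> complex" and i
  have n0: "0 < n" using n by simp
  have mz: "\<And>i j. n \<le> i \<or> n \<le> j \<Longrightarrow> d i j = 0" using mat unfolding is_mat_def by blast
  let ?nb = "\<lambda>k. if 0 < k \<and> k < n then x (k - 1) * y 0 else 0"
  have L: "mat_app n d (nf_br n x y) i = (\<Sum>k<n. d i k * ?nb k)"
    using n0 by (simp add: nf_br_closed mat_app_apply)
  have Rr: "(nf_br n (mat_app n d x) y + nf_br n x (mat_app n d y)) i =
     (if 0 < i \<and> i < n then (\<Sum>j<n. d (i - 1) j * x j) * y 0 + x (i - 1) * (\<Sum>j<n. d 0 j * y j) else 0)"
    using n0 by (simp add: nf_br_closed mat_app_apply)
  show "mat_app n d (nf_br n x y) i = (nf_br n (mat_app n d x) y + nf_br n x (mat_app n d y)) i"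
  proof (cases "0 < i \<and> i < n")
    case False
    have "(\<Sum>k<n. d i k * ?nb k) = 0"
    proof (rule sum.neutral, rule ballI)
      fix k assume "k \<in> {..<n}"
      show "d i k * ?nb k = 0"
      proof (cases "i = 0")
        case True
        then show ?thesis using R1[of k] by auto
      next
        case False
        then have "n \<le> i" using \<open>\<not> (0 < i \<and> i < n)\<close> by simp
        then show ?thesis using mz by simp
      qed
    qed
    then show ?thesis using L Rr False by simp
  next
    case True
    have im: "i - 1 < m" using True n by linarith
    have s0: "(\<Sum>j<n. d 0 j * y j) = d 0 0 * y 0"
      unfolding n sum.lessThan_Suc_shift using R1 by simp
    have s1: "(\<Sum>j<n. d (i - 1) j * x j) = (\<Sum>j<m. d (i - 1) j * x j)"
    proof -
      have "i - 1 < m" using True n by linarith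
      then have "d (i - 1) m = 0" by (rule R3)
      then show ?thesis unfolding n by simp
    qed
    have "(\<Sum>k<n. d i k * ?nb k) = (\<Sum>k<m. d i (Suc k) * (x k * y 0))"
      unfolding n sum.lessThan_Suc_shift using n by simp
    also have "\<dots> = (\<Sum>k<m. d (i - 1) k * x k * y 0 + (if k = i - 1 then d 0 0 * x (i - 1) * y 0 else 0))"
      by (rule sum.cong[OF refl]) (use R2 True in \<open>auto simp: algebra_simps\<close>)
    also have "\<dots> = (\<Sum>k<m. d (i - 1) k * x k) * y 0 + d 0 0 * x (i - 1) * y 0"
      using True n im by (simp add: sum.distrib sum_distrib_right)
    finally show ?thesis using L Rr True s0 s1 by (simp add: algebra_simps)
  qed
qed


lemma mkd_der:
  assumes "2 \<le> n"
  shows "is_derivation n (mkd n c)"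
proof -
  obtain m where n: "n = Suc m" using assms by (cases n) auto
  have d00: "mkd n c 0 0 = c 0" using n by (simp add: mkd_def)
  show ?thesis
  proof (rule der_of_rel[OF n])
    show "is_mat n (mkd n c)" by (auto simp: is_mat_def mkd_def)
    show "\<And>j. 0 < j \<Longrightarrow> mkd n c 0 j = 0" by (simp add: mkd_def)
    show "\<And>i. i < m \<Longrightarrow> mkd n c i m = 0" by (simp add: mkd_def)
    fix i k assume i: "0 < i" "i < n" and k: "k < m"
    consider "Suc k < i" | "Suc k = i" | "i < Suc k" by linarith
    then show "mkd n c i (Suc k) = mkd n c (i - 1) k + (if k = i - 1 then mkd n c 0 0 else 0)"
    proof cases
      case 1
      then have "k < i - 1" "i - 1 < n" "i - 1 - k = i - Suc k" "k \<noteq> i - 1" using i by auto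
      then show ?thesis using 1 i by (simp add: mkd_def)
    next
      case 2
      then have "i - 1 = k" "k < n" using k by (auto simp: n)
      then show ?thesis using 2 i d00 by (simp add: mkd_def algebra_simps)
    next
      case 3
      then have "\<not> k < i - 1" "k \<noteq> i - 1" "i \<noteq> Suc k" using i by auto
      then show ?thesis using 3 i by (simp add: mkd_def)
    qed
  qed
qed

lemma mat_app_mkD: "0 < n \<Longrightarrow> mat_app n (mkD n b) v = (\<lambda>j. if j < n then b j * v 0 else 0)"
proof (intro ext)
  fix j assume n: "0 < n"
  have "\<And>ja. mkD n b j ja * v ja = (if ja = 0 then (if j < n then b j * v 0 else 0) else 0)"
    by (simp add: mkD_def)
  then show "mat_app n (mkD n b) v j = (if j < n then b j * v 0 else 0)"
    using n by (simp add: mat_app_apply)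
qed

lemma mat_app_mkd0: "0 < n \<Longrightarrow> mat_app n (mkd n c) v 0 = c 0 * v 0"
proof -
  assume n: "0 < n"
  have "\<And>ja. mkd n c 0 ja * v ja = (if ja = 0 then c 0 * v 0 else 0)"
    using n by (simp add: mkd_def)
  then show ?thesis using n by (simp add: mat_app_apply)
qed

lemma mkD_anti:
  assumes "2 \<le> n"
  shows "is_antiderivation n (mkD n b)"
  unfolding is_antiderivation_def
proof (intro conjI ballI ext)
  show "is_mat n (mkD n b)" by (auto simp: is_mat_def mkD_def)
  fix x y :: "nat \<Rightarrow> complex" and i
  have n0: "0 < n" using assms by simp
  have "mat_app n (mkD n b) (nf_br n x y) i = 0"
    using n0 by (simp add: mat_app_mkD nf_br_closed)
  moreover have "(nf_br n (mat_app n (mkD n b) x) y - nf_br n (mat_app n (mkD n b) y) x) i = 0"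
    using n0 by (simp add: mat_app_mkD nf_br_closed)
  ultimately show "mat_app n (mkD n b) (nf_br n x y) i =
     (nf_br n (mat_app n (mkD n b) x) y - nf_br n (mat_app n (mkD n b) y) x) i" by simp
qed

lemma bider_sup:
  assumes "2 \<le> n" "b 0 = c 0"
  shows "(mkd n c, mkD n b) \<in> Bider n"
proof -
  have n0: "0 < n" using assms by simp
  have "nf_br n x (mat_app n (mkd n c) y) = nf_br n x (mat_app n (mkD n b) y)" for x y
  proof (rule ext)
    fix k
    have "mat_app n (mkd n c) y 0 = mat_app n (mkD n b) y 0"
      using n0 assms by (simp add: mat_app_mkD mat_app_mkd0)
    then show "nf_br n x (mat_app n (mkd n c) y) k = nf_br n x (mat_app n (mkD n b) y) k"
      using n0 by (simp add: nf_br_closed)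
  qed
  then show ?thesis using mkd_der[OF assms(1)] mkD_anti[OF assms(1)] unfolding Bider_def by blast
qed


lemma Bider_eq: "2 \<le> n \<Longrightarrow> Bider n = {(mkd n c, mkD n b) | c b. b 0 = c 0}"
  using bider_sub bider_sup by blast

section \<open>Matrix algebra\<close>

lemma mat_comp_assoc: "mat_comp n (mat_comp n A B) C = mat_comp n A (mat_comp n B C)"
proof (intro ext)
  fix i j
  show "mat_comp n (mat_comp n A B) C i j = mat_comp n A (mat_comp n B C) i j"
  proof -
    have "mat_comp n (mat_comp n A B) C i j = (\<Sum>k<n. \<Sum>l<n. A i l * B l k * C k j)"
      unfolding mat_comp_def by (simp add: sum_distrib_right)
    also have "\<dots> = (\<Sum>l<n. \<Sum>k<n. A i l * B l k * C k j)" by (rule sum.swap)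
    also have "\<dots> = mat_comp n A (mat_comp n B C) i j"
      unfolding mat_comp_def by (simp add: sum_distrib_left mult.assoc)
    finally show ?thesis .
  qed
qed

lemma mat_comp_diff_left: "mat_comp n (A - B) C = mat_comp n A C - mat_comp n B C"
  by (intro ext) (simp add: mat_comp_def algebra_simps sum_subtractf)

lemma mat_comp_diff_right: "mat_comp n A (B - C) = mat_comp n A B - mat_comp n A C"
  by (intro ext) (simp add: mat_comp_def algebra_simps sum_subtractf)

lemma mat_comp_add_left: "mat_comp n (A + B) C = mat_comp n A C + mat_comp n B C"
  by (intro ext) (simp add: mat_comp_def algebra_simps sum.distrib)

lemma mat_comp_add_right: "mat_comp n A (B + C) = mat_comp n A B + mat_comp n A C"
  by (intro ext) (simp add: mat_comp_def algebra_simps sum.distrib)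

lemma mat_comp_scale_left: "mat_comp n (\<lambda>i j. c * A i j) B = (\<lambda>i j. c * mat_comp n A B i j)"
  by (intro ext) (simp add: mat_comp_def sum_distrib_left mult.assoc)

lemma mat_comp_scale_right: "mat_comp n A (\<lambda>i j. c * B i j) = (\<lambda>i j. c * mat_comp n A B i j)"
  by (intro ext) (simp add: mat_comp_def sum_distrib_left algebra_simps)

lemma mat_comp_zero_left: "mat_comp n 0 B = 0"
  by (intro ext) (simp add: mat_comp_def)

lemma mat_comp_zero_right: "mat_comp n A 0 = 0"
  by (intro ext) (simp add: mat_comp_def)

lemma mat_app_comp: "mat_app n (mat_comp n A B) v = mat_app n A (mat_app n B v)"
proof (intro ext)
  fix i
  show "mat_app n (mat_comp n A B) v i = mat_app n A (mat_app n B v) i"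
  proof -
    have "mat_app n (mat_comp n A B) v i = (\<Sum>k<n. \<Sum>l<n. A i l * B l k * v k)"
      unfolding mat_comp_def mat_app_def by (simp add: sum_distrib_right)
    also have "\<dots> = (\<Sum>l<n. \<Sum>k<n. A i l * B l k * v k)" by (rule sum.swap)
    also have "\<dots> = mat_app n A (mat_app n B v) i"
      unfolding mat_app_def by (simp add: sum_distrib_left mult.assoc)
    finally show ?thesis .
  qed
qed

lemma mat_app_add: "mat_app n A (u + v) = mat_app n A u + mat_app n A v"
  by (intro ext) (simp add: mat_app_def algebra_simps sum.distrib)

lemma mat_app_diff: "mat_app n A (u - v) = mat_app n A u - mat_app n A v"
  by (intro ext) (simp add: mat_app_def algebra_simps sum_subtractf)

lemma mat_app_diff_mat: "mat_app n (A - B) v = mat_app n A v - mat_app n B v"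
  by (intro ext) (simp add: mat_app_def algebra_simps sum_subtractf)

lemma mat_app_vecs: "is_mat n A \<Longrightarrow> mat_app n A v \<in> vecs n"
  by (simp add: vecs_def is_mat_def mat_app_def)

lemma nf_br_vecs: "0 < n \<Longrightarrow> nf_br n x y \<in> vecs n"
  by (simp add: vecs_def nf_br_closed)

lemma nf_br_add_left: "0 < n \<Longrightarrow> nf_br n (a + b) y = nf_br n a y + nf_br n b y"
  by (intro ext) (simp add: nf_br_closed algebra_simps)
lemma nf_br_diff_left: "0 < n \<Longrightarrow> nf_br n (a - b) y = nf_br n a y - nf_br n b y"
  by (intro ext) (simp add: nf_br_closed algebra_simps)
lemma nf_br_add_right: "0 < n \<Longrightarrow> nf_br n x (a + b) = nf_br n x a + nf_br n x b"
  by (intro ext) (simp add: nf_br_closed algebra_simps)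
lemma nf_br_diff_right: "0 < n \<Longrightarrow> nf_br n x (a - b) = nf_br n x a - nf_br n x b"
  by (intro ext) (simp add: nf_br_closed algebra_simps)

lemma is_mat_comp: "is_mat n A \<Longrightarrow> is_mat n B \<Longrightarrow> is_mat n (mat_comp n A B)"
  by (simp add: is_mat_def mat_comp_def)

lemma is_mat_diff: "is_mat n A \<Longrightarrow> is_mat n B \<Longrightarrow> is_mat n (A - B)"
  by (simp add: is_mat_def)


lemma der_comm:
  assumes d: "is_derivation n d" and e: "is_derivation n e" and n0: "0 < n"
  shows "is_derivation n (mat_comp n d e - mat_comp n e d)"
  unfolding is_derivation_def
proof (intro conjI ballI)
  have md: "is_mat n d" and me: "is_mat n e" using d e by (auto simp: is_derivation_def)
  show "is_mat n (mat_comp n d e - mat_comp n e d)" by (intro is_mat_diff is_mat_comp md me)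
  have D: "\<And>u v. u \<in> vecs n \<Longrightarrow> v \<in> vecs n \<Longrightarrow> mat_app n d (nf_br n u v) = nf_br n (mat_app n d u) v + nf_br n u (mat_app n d v)"
    using d by (simp add: is_derivation_def)
  have E: "\<And>u v. u \<in> vecs n \<Longrightarrow> v \<in> vecs n \<Longrightarrow> mat_app n e (nf_br n u v) = nf_br n (mat_app n e u) v + nf_br n u (mat_app n e v)"
    using e by (simp add: is_derivation_def)
  have vd: "\<And>v. mat_app n d v \<in> vecs n" and ve: "\<And>v. mat_app n e v \<in> vecs n"
    using md me by (auto intro: mat_app_vecs)
  fix x y assume x: "x \<in> vecs n" and y: "y \<in> vecs n"
  show "mat_app n (mat_comp n d e - mat_comp n e d) (nf_br n x y) =
    nf_br n (mat_app n (mat_comp n d e - mat_comp n e d) x) y + nf_br n x (mat_app n (mat_comp n d e - mat_comp n e d) y)"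
    by (simp add: mat_app_diff_mat mat_app_comp D E x y vd ve mat_app_add nf_br_diff_left nf_br_diff_right n0)
qed

lemma anti_comm:
  assumes d: "is_antiderivation n d" and e: "is_derivation n e" and n0: "0 < n"
  shows "is_antiderivation n (mat_comp n d e - mat_comp n e d)"
  unfolding is_antiderivation_def
proof (intro conjI ballI)
  have md: "is_mat n d" and me: "is_mat n e" using d e by (auto simp: is_derivation_def is_antiderivation_def)
  show "is_mat n (mat_comp n d e - mat_comp n e d)" by (intro is_mat_diff is_mat_comp md me)
  have D: "\<And>u v. u \<in> vecs n \<Longrightarrow> v \<in> vecs n \<Longrightarrow> mat_app n d (nf_br n u v) = nf_br n (mat_app n d u) v - nf_br n (mat_app n d v) u"
    using d by (simp add: is_antiderivation_def)
  have E: "\<And>u v. u \<in> vecs n \<Longrightarrow> v \<in> vecs n \<Longrightarrow> mat_app n e (nf_br n u v) = nf_br n (mat_app n e u) v + nf_br n u (mat_app n e v)"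
    using e by (simp add: is_derivation_def)
  have vd: "\<And>v. mat_app n d v \<in> vecs n" and ve: "\<And>v. mat_app n e v \<in> vecs n"
    using md me by (auto intro: mat_app_vecs)
  fix x y assume x: "x \<in> vecs n" and y: "y \<in> vecs n"
  show "mat_app n (mat_comp n d e - mat_comp n e d) (nf_br n x y) =
    nf_br n (mat_app n (mat_comp n d e - mat_comp n e d) x) y - nf_br n (mat_app n (mat_comp n d e - mat_comp n e d) y) x"
    by (simp add: mat_app_diff_mat mat_app_comp D E x y vd ve mat_app_add mat_app_diff nf_br_diff_left nf_br_diff_right n0)
qed


lemma br_closed:
  assumes p: "p \<in> Bider n" and q: "q \<in> Bider n" and n0: "0 < n"
  shows "bider_br n p q \<in> Bider n"
proof -
  obtain d D where pd: "p = (d, D)" by fastforce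
  obtain e E where qe: "q = (e, E)" by fastforce
  have dd: "is_derivation n d" and aD: "is_antiderivation n D"
    and cp: "\<And>x y. x \<in> vecs n \<Longrightarrow> y \<in> vecs n \<Longrightarrow> nf_br n x (mat_app n d y) = nf_br n x (mat_app n D y)"
    using p pd by (auto simp: Bider_def)
  have de: "is_derivation n e" using q qe by (auto simp: Bider_def)
  have me: "is_mat n e" using de by (simp add: is_derivation_def)
  have E: "\<And>u v. u \<in> vecs n \<Longrightarrow> v \<in> vecs n \<Longrightarrow> mat_app n e (nf_br n u v) = nf_br n (mat_app n e u) v + nf_br n u (mat_app n e v)"
    using de by (simp add: is_derivation_def)
  have md: "is_mat n d" using dd by (simp add: is_derivation_def)
  have mD: "is_mat n D" using aD by (simp add: is_antiderivation_def)
  have c2: "nf_br n x (mat_app n (mat_comp n d e - mat_comp n e d) y) = nf_br n x (mat_app n (mat_comp n D e - mat_comp n e D) y)"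
    if x: "x \<in> vecs n" and y: "y \<in> vecs n" for x y
  proof -
    have ey: "mat_app n e y \<in> vecs n" "mat_app n e x \<in> vecs n" "mat_app n d y \<in> vecs n" "mat_app n D y \<in> vecs n"
      using me md mD by (auto intro: mat_app_vecs)
    have a: "nf_br n x (mat_app n d (mat_app n e y)) = nf_br n x (mat_app n D (mat_app n e y))"
      using cp x ey by blast
    have "nf_br n x (mat_app n e (mat_app n d y)) = mat_app n e (nf_br n x (mat_app n d y)) - nf_br n (mat_app n e x) (mat_app n d y)"
      using E[OF x ey(3)] by simp
    also have "\<dots> = mat_app n e (nf_br n x (mat_app n D y)) - nf_br n (mat_app n e x) (mat_app n D y)"
      using cp[OF x y] cp[OF ey(2) y] by simp
    also have "\<dots> = nf_br n x (mat_app n e (mat_app n D y))"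
      using E[OF x ey(4)] by simp
    finally have b: "nf_br n x (mat_app n e (mat_app n d y)) = nf_br n x (mat_app n e (mat_app n D y))" .
    show ?thesis using a b by (simp add: mat_app_diff_mat mat_app_comp nf_br_diff_right n0)
  qed
  show ?thesis
    unfolding pd qe bider_br_def Bider_def
    using der_comm[OF dd de n0] anti_comm[OF aD de n0] c2 by simp
qed


lemma vs: "vector_space pscale"
  by unfold_locales (auto simp: pscale_def algebra_simps fun_eq_iff prod_eq_iff)

interpretation V: vector_space pscale by (rule vs)

lemma pscale_mk: "pscale r (mkd n c, mkD n b) = (mkd n (\<lambda>i. r * c i), mkD n (\<lambda>i. r * b i))"
  by (auto simp: pscale_def mkd_def mkD_def fun_eq_iff algebra_simps)

lemma add_mk: "(mkd n c, mkD n b) + (mkd n c', mkD n b') = (mkd n (\<lambda>i. c i + c' i), mkD n (\<lambda>i. b i + b' i))"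
  by (auto simp: mkd_def mkD_def fun_eq_iff algebra_simps)

lemma add_mkd: "mkd n c + mkd n c' = mkd n (\<lambda>i. c i + c' i)"
  by (auto simp: mkd_def fun_eq_iff algebra_simps)
lemma add_mkD: "mkD n b + mkD n b' = mkD n (\<lambda>i. b i + b' i)"
  by (auto simp: mkD_def fun_eq_iff algebra_simps)

lemma zero_mk: "(0 :: cmat \<times> cmat) = (mkd n (\<lambda>i. 0), mkD n (\<lambda>i. 0))"
  by (auto simp: mkd_def mkD_def fun_eq_iff zero_prod_def)

lemma Bider_subspace:
  assumes "2 \<le> n" shows "V.subspace (Bider n)"
  unfolding V.subspace_def Bider_eq[OF assms]
proof (intro conjI ballI allI)
  show "0 \<in> {(mkd n c, mkD n b) |c b. b 0 = c 0}" by (subst zero_mk[of n]) blast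
next
  fix x y assume "x \<in> {(mkd n c, mkD n b) |c b. b 0 = c 0}" "y \<in> {(mkd n c, mkD n b) |c b. b 0 = c 0}"
  then obtain c b c' b' where "x = (mkd n c, mkD n b)" "b 0 = c 0" "y = (mkd n c', mkD n b')" "b' 0 = c' 0" by blast
  then have "x + y = (mkd n (\<lambda>i. c i + c' i), mkD n (\<lambda>i. b i + b' i))" "(\<lambda>i. b i + b' i) 0 = (\<lambda>i. c i + c' i) 0"
    by (simp_all add: add_mkd add_mkD)
  then show "x + y \<in> {(mkd n c, mkD n b) |c b. b 0 = c 0}" by blast
next
  fix r x assume "x \<in> {(mkd n c, mkD n b) |c b. b 0 = c 0}"
  then obtain c b where "x = (mkd n c, mkD n b)" "b 0 = c 0" by blast
  then have "pscale r x = (mkd n (\<lambda>i. r * c i), mkD n (\<lambda>i. r * b i))" "(\<lambda>i. r * b i) 0 = (\<lambda>i. r * c i) 0"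
    by (simp_all add: pscale_mk)
  then show "pscale r x \<in> {(mkd n c, mkD n b) |c b. b 0 = c 0}" by blast
qed

lemma leibniz:
  assumes "2 \<le> n" shows "leibniz_algebra_on pscale (bider_br n) (Bider n)"
  unfolding leibniz_algebra_on_def
proof (intro conjI ballI allI vs)
  show "V.subspace (Bider n)" by (rule Bider_subspace[OF assms])
  fix x y z assume x: "x \<in> Bider n" and y: "y \<in> Bider n" and z: "z \<in> Bider n"
  show "bider_br n x y \<in> Bider n" using br_closed x y assms by simp
  show "bider_br n (x + y) z = bider_br n x z + bider_br n y z"
    by (simp add: bider_br_def mat_comp_add_left mat_comp_add_right algebra_simps)
  show "bider_br n z (x + y) = bider_br n z x + bider_br n z y"
    by (simp add: bider_br_def mat_comp_add_left mat_comp_add_right algebra_simps)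
  show "bider_br n x (bider_br n y z) = bider_br n (bider_br n x y) z - bider_br n (bider_br n x z) y"
    by (simp add: bider_br_def mat_comp_diff_left mat_comp_diff_right mat_comp_assoc algebra_simps)
next
  fix c x y assume x: "x \<in> Bider n" and y: "y \<in> Bider n"
  show "bider_br n (pscale c x) y = pscale c (bider_br n x y)"
    by (simp add: bider_br_def pscale_def mat_comp_scale_left mat_comp_scale_right fun_eq_iff algebra_simps)
  show "bider_br n x (pscale c y) = pscale c (bider_br n x y)"
    by (simp add: bider_br_def pscale_def mat_comp_scale_left mat_comp_scale_right fun_eq_iff algebra_simps)
qed


section \<open>Solvability\<close>

lemma mat_comp_mkd00: "0 < n \<Longrightarrow> mat_comp n (mkd n c) A 0 0 = c 0 * A 0 0"
proof -
  assume n: "0 < n"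
  have "\<And>k. mkd n c 0 k * A k 0 = (if k = 0 then c 0 * A 0 0 else 0)"
    using n by (simp add: mkd_def)
  then show ?thesis using n by (simp add: mat_comp_def)
qed

lemma mkd_00: "0 < n \<Longrightarrow> mkd n c 0 0 = c 0"
  by (simp add: mkd_def)

lemma mkd_c0: "c 0 = 0 \<Longrightarrow> mkd n c x k = (if k < x \<and> x < n then c (x - k) else 0)"
  by (simp add: mkd_def)

lemma comp_mkd_entry:
  assumes "c 0 = 0" "c' 0 = 0"
  shows "mat_comp n (mkd n c) (mkd n c') x y = (if x < n then (\<Sum>k\<in>{y<..<x}. c (x - k) * c' (k - y)) else 0)"
proof (cases "x < n")
  case True
  have "mat_comp n (mkd n c) (mkd n c') x y = (\<Sum>k<n. if k \<in> {y<..<x} then c (x - k) * c' (k - y) else 0)"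
    unfolding mat_comp_def using True assms by (intro sum.cong refl) (auto simp: mkd_c0)
  also have "\<dots> = (\<Sum>k\<in>{..<n} \<inter> {y<..<x}. c (x - k) * c' (k - y))"
    by (rule sum.inter_restrict[symmetric]) simp
  also have "{..<n} \<inter> {y<..<x} = {y<..<x}" using True by auto
  finally show ?thesis using True by simp
next
  case False
  then show ?thesis using assms by (simp add: mat_comp_def mkd_c0)
qed

lemma comp_mkd_comm:
  assumes "c 0 = 0" "c' 0 = 0"
  shows "mat_comp n (mkd n c) (mkd n c') = mat_comp n (mkd n c') (mkd n c)"
proof (intro ext)
  fix x y
  have "(\<Sum>k\<in>{y<..<x}. c (x - k) * c' (k - y)) = (\<Sum>k\<in>{y<..<x}. c' (x - k) * c (k - y))"
    by (rule sum.reindex_bij_witness[where i="\<lambda>k. x + y - k" and j="\<lambda>k. x + y - k"])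
       (auto simp: mult.commute)
  then show "mat_comp n (mkd n c) (mkd n c') x y = mat_comp n (mkd n c') (mkd n c) x y"
    using assms by (simp add: comp_mkd_entry)
qed

lemma level1:
  assumes "2 \<le> n"
  shows "derived_series pscale (bider_br n) (Bider n) 1 \<subseteq> {p \<in> Bider n. fst p 0 0 = 0}"
proof -
  have n0: "0 < n" using assms by simp
  have sub: "V.subspace {p \<in> Bider n. fst p 0 0 = 0}"
    using Bider_subspace[OF assms] unfolding V.subspace_def by (auto simp: pscale_def)
  have "{bider_br n x y |x y. x \<in> Bider n \<and> y \<in> Bider n} \<subseteq> {p \<in> Bider n. fst p 0 0 = 0}"
  proof (rule subsetI)
    fix p assume "p \<in> {bider_br n x y |x y. x \<in> Bider n \<and> y \<in> Bider n}"
    then obtain x y where p: "p = bider_br n x y" and x: "x \<in> Bider n" and y: "y \<in> Bider n" by blast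
    obtain c b where cx: "x = (mkd n c, mkD n b)" using bider_sub[OF x assms] by blast
    obtain c' b' where cy: "y = (mkd n c', mkD n b')" using bider_sub[OF y assms] by blast
    have "bider_br n x y \<in> Bider n" using br_closed x y n0 by blast
    moreover have "fst (bider_br n x y) 0 0 = 0"
      using n0 by (simp add: cx cy bider_br_def mat_comp_mkd00 mkd_00)
    ultimately show "p \<in> {p \<in> Bider n. fst p 0 0 = 0}" by (simp add: p)
  qed
  then show ?thesis using V.span_minimal[OF _ sub] by (simp add: numeral_eq_Suc)
qed


lemma level2:
  assumes "2 \<le> n"
  shows "derived_series pscale (bider_br n) (Bider n) 2 \<subseteq> {p. fst p = 0}"
proof -
  have n0: "0 < n" using assms by simp
  have sub: "V.subspace {p :: cmat \<times> cmat. fst p = 0}"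
    unfolding V.subspace_def by (auto simp: pscale_def fun_eq_iff)
  have "{bider_br n x y |x y. x \<in> derived_series pscale (bider_br n) (Bider n) 1 \<and> y \<in> derived_series pscale (bider_br n) (Bider n) 1}
        \<subseteq> {p. fst p = 0}"
  proof (rule subsetI)
    fix p assume "p \<in> {bider_br n x y |x y. x \<in> derived_series pscale (bider_br n) (Bider n) 1 \<and> y \<in> derived_series pscale (bider_br n) (Bider n) 1}"
    then obtain x y where p: "p = bider_br n x y" and x: "x \<in> {p \<in> Bider n. fst p 0 0 = 0}" and y: "y \<in> {p \<in> Bider n. fst p 0 0 = 0}"
      using level1[OF assms] by blast
    obtain c b where cx: "x = (mkd n c, mkD n b)" using bider_sub[of x n] x assms by blast
    obtain c' b' where cy: "y = (mkd n c', mkD n b')" using bider_sub[of y n] y assms by blast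
    have "c 0 = 0" using x cx n0 by (simp add: mkd_00)
    moreover have "c' 0 = 0" using y cy n0 by (simp add: mkd_00)
    ultimately have "mat_comp n (mkd n c) (mkd n c') = mat_comp n (mkd n c') (mkd n c)" by (rule comp_mkd_comm)
    then show "p \<in> {p. fst p = 0}" by (simp add: p cx cy bider_br_def)
  qed
  then show ?thesis using V.span_minimal[OF _ sub] by (simp add: numeral_eq_Suc)
qed

lemma level3:
  assumes "2 \<le> n"
  shows "derived_series pscale (bider_br n) (Bider n) 3 = {0}"
proof -
  let ?S = "{bider_br n x y |x y. x \<in> derived_series pscale (bider_br n) (Bider n) 2 \<and> y \<in> derived_series pscale (bider_br n) (Bider n) 2}"
  have "?S \<subseteq> {0}"
  proof (rule subsetI)
    fix p assume "p \<in> ?S"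
    then obtain x y where p: "p = bider_br n x y" and x: "fst x = 0" and y: "fst y = 0"
      using level2[OF assms] by blast
    show "p \<in> {0}" by (simp add: p x y bider_br_def mat_comp_zero_left mat_comp_zero_right zero_prod_def)
  qed
  moreover have "V.subspace {0 :: cmat \<times> cmat}" unfolding V.subspace_def by (auto simp: pscale_def zero_prod_def fun_eq_iff)
  ultimately have "V.span ?S \<subseteq> {0}" by (rule V.span_minimal)
  moreover have "derived_series pscale (bider_br n) (Bider n) 3 = V.span ?S" by (simp add: numeral_eq_Suc)
  ultimately show ?thesis using V.span_zero by blast
qed


section \<open>Dimension\<close>

definition gc :: "nat \<Rightarrow> nat \<Rightarrow> nat \<Rightarrow> complex" where
  "gc n t = (if t < n then unitv t else (\<lambda>_. 0))"
definition gb :: "nat \<Rightarrow> nat \<Rightarrow> nat \<Rightarrow> complex" where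
  "gb n t = (if t = 0 then unitv 0 else if t < n then (\<lambda>_. 0) else unitv (t + 1 - n))"
definition gg :: "nat \<Rightarrow> nat \<Rightarrow> cmat \<times> cmat" where
  "gg n t = (mkd n (gc n t), mkD n (gb n t))"
definition phi :: "nat \<Rightarrow> nat \<Rightarrow> cmat \<times> cmat \<Rightarrow> complex" where
  "phi n t p = (if t < n then fst p t 0 else snd p (t + 1 - n) 0)"

lemma gg_in: "2 \<le> n \<Longrightarrow> gg n t \<in> Bider n"
  unfolding gg_def by (rule bider_sup) (auto simp: gb_def gc_def unitv_def)

lemma phi_gg: "2 \<le> n \<Longrightarrow> t < 2 * n - 1 \<Longrightarrow> s < 2 * n - 1 \<Longrightarrow> phi n t (gg n s) = (if t = s then 1 else 0)"
  by (auto simp: phi_def gg_def mkd_def mkD_def gc_def gb_def unitv_def)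

lemma phi_sum: "finite A \<Longrightarrow> phi n t (\<Sum>v\<in>A. pscale (u v) v) = (\<Sum>v\<in>A. u v * phi n t v)"
  by (simp add: phi_def fst_sum snd_sum sum_fun_apply pscale_def)

lemma gg_inj: "2 \<le> n \<Longrightarrow> inj_on (gg n) {..<2 * n - 1}"
proof (rule inj_onI)
  fix s t assume n: "2 \<le> n" and s: "s \<in> {..<2 * n - 1}" and t: "t \<in> {..<2 * n - 1}" and e: "gg n s = gg n t"
  have "phi n s (gg n s) = phi n s (gg n t)" using e by simp
  then show "s = t" using phi_gg[OF n] s t by (auto split: if_splits)
qed


lemma gg_indep:
  assumes n: "2 \<le> n"
  shows "V.independent (gg n ` {..<2 * n - 1})"
proof -
  have fin: "finite (gg n ` {..<2 * n - 1})" by simp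
  have "u v = 0" if S: "(\<Sum>v\<in>gg n ` {..<2 * n - 1}. pscale (u v) v) = 0" and v: "v \<in> gg n ` {..<2 * n - 1}" for u v
  proof -
  from v obtain s where s: "s < 2 * n - 1" and vs: "v = gg n s" by blast
  have "0 = phi n s (\<Sum>v\<in>gg n ` {..<2 * n - 1}. pscale (u v) v)"
    unfolding S by (simp add: phi_def)
  also have "\<dots> = (\<Sum>w\<in>gg n ` {..<2 * n - 1}. u w * phi n s w)" by (simp add: phi_sum)
  also have "\<dots> = (\<Sum>w\<in>gg n ` {..<2 * n - 1}. if w = v then u w else 0)"
  proof (rule sum.cong[OF refl])
    fix w assume "w \<in> gg n ` {..<2 * n - 1}"
    then obtain t where t: "t < 2 * n - 1" and wt: "w = gg n t" by blast
    have "(w = v) = (t = s)" using gg_inj[OF n] s t unfolding vs wt inj_on_def by blast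
    then show "u w * phi n s w = (if w = v then u w else 0)"
      using phi_gg[OF n s t] wt by auto
  qed
  also have "\<dots> = u v" using v by (simp add: sum.delta)
  finally show "u v = 0" by simp
  qed
  then show ?thesis using V.dependent_finite[OF fin] by blast
qed

lemma sum_gg:
  "finite T \<Longrightarrow> (\<Sum>t\<in>T. pscale (a t) (gg n t)) = (mkd n (\<lambda>i. \<Sum>t\<in>T. a t * gc n t i), mkD n (\<lambda>i. \<Sum>t\<in>T. a t * gb n t i))"
proof (induction T rule: finite_induct)
  case empty
  then show ?case using zero_mk[of n] by simp
next
  case (insert x F)
  then show ?case by (simp add: gg_def pscale_mk add_mkd add_mkD)
qed

lemma mkd_cong: "0 < n \<Longrightarrow> (\<And>i. i < n \<Longrightarrow> c i = c' i) \<Longrightarrow> mkd n c = mkd n c'"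
  by (auto simp: mkd_def fun_eq_iff)

lemma mkD_cong: "(\<And>i. i < n \<Longrightarrow> c i = c' i) \<Longrightarrow> mkD n c = mkD n c'"
  by (auto simp: mkD_def fun_eq_iff)

lemma gg_span:
  assumes n: "2 \<le> n"
  shows "Bider n \<subseteq> V.span (gg n ` {..<2 * n - 1})"
proof
  fix p assume "p \<in> Bider n"
  then obtain c b where p: "p = (mkd n c, mkD n b)" and bc: "b 0 = c 0" using bider_sub n by blast
  have n0: "0 < n" using n by simp
  let ?a = "\<lambda>t. phi n t p"
  have A: "(\<Sum>t<2 * n - 1. ?a t * gc n t i) = c i" if i: "i < n" for i
  proof -
    have "(\<Sum>t<2 * n - 1. ?a t * gc n t i) = (\<Sum>t<2 * n - 1. if t = i then c i else 0)"
      by (rule sum.cong[OF refl]) (use i n0 n in \<open>auto simp: phi_def p gc_def unitv_def mkd_def\<close>)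
    also have "\<dots> = c i" proof - have "i < 2 * n - 1" using i n by linarith then show ?thesis by (simp add: sum.delta) qed
    finally show ?thesis .
  qed
  have B: "(\<Sum>t<2 * n - 1. ?a t * gb n t i) = b i" if i: "i < n" for i
  proof -
    let ?j = "if i = 0 then 0 else i + n - 1"
    have "(\<Sum>t<2 * n - 1. ?a t * gb n t i) = (\<Sum>t<2 * n - 1. if t = ?j then b i else 0)"
    proof (rule sum.cong[OF refl])
      fix t assume t: "t \<in> {..<2 * n - 1}"
      consider "t = 0" | "0 < t" "t < n" | "n \<le> t" by linarith
      then show "?a t * gb n t i = (if t = ?j then b i else 0)"
      proof cases
        case 1
        have "?a t = b 0" using 1 n0 bc by (simp add: phi_def p mkd_def)
        then show ?thesis using 1 n by (auto simp: gb_def unitv_def)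
      next
        case 2
        then have "t \<noteq> ?j" by auto
        then show ?thesis using 2 by (simp add: gb_def)
      next
        case 3
        have lt: "t + 1 - n < n" using t 3 by auto
        have "?a t = b (t + 1 - n)" using 3 lt by (simp add: phi_def p mkD_def)
        moreover have "(t = ?j) = (i = t + 1 - n)" using 3 i by auto
        moreover have "gb n t i = (if i = t + 1 - n then 1 else 0)" using 3 n0 by (simp add: gb_def unitv_def)
        ultimately show ?thesis by auto
      qed
    qed
    also have "\<dots> = b i" proof - have "?j < 2 * n - 1" using i n by auto then show ?thesis by (simp add: sum.delta) qed
    finally show ?thesis .
  qed
  have e1: "mkd n c = mkd n (\<lambda>i. \<Sum>t<2 * n - 1. ?a t * gc n t i)"
    by (rule mkd_cong[OF n0], rule A[symmetric])
  have e2: "mkD n b = mkD n (\<lambda>i. \<Sum>t<2 * n - 1. ?a t * gb n t i)"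
    by (rule mkD_cong, rule B[symmetric])
  have "p = (mkd n c, mkD n b)" by (rule p)
  also have "\<dots> = (mkd n (\<lambda>i. \<Sum>t<2 * n - 1. ?a t * gc n t i), mkD n (\<lambda>i. \<Sum>t<2 * n - 1. ?a t * gb n t i))"
    by (rule arg_cong2[where f=Pair, OF e1 e2])
  also have "\<dots> = (\<Sum>t<2 * n - 1. pscale (?a t) (gg n t))"
    by (rule sum_gg[OF finite_lessThan, symmetric])
  also have "\<dots> \<in> V.span (gg n ` {..<2 * n - 1})"
    by (intro V.span_sum V.span_scale V.span_base) auto
  finally show "p \<in> V.span (gg n ` {..<2 * n - 1})" .
qed


theorem mainTheorem3:
  fixes n :: nat
  assumes "n \<ge> 2"
  shows "leibniz_algebra_on pscale (bider_br n) (Bider n) \<and>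
         solvable_on pscale (bider_br n) (Bider n) \<and>
         vector_space.dim pscale (Bider n) = 2 * n - 1"
proof (intro conjI)
  show "leibniz_algebra_on pscale (bider_br n) (Bider n)" using leibniz assms by simp
  show "solvable_on pscale (bider_br n) (Bider n)"
    unfolding solvable_on_def using level3 assms by blast
  have "card (gg n ` {..<2 * n - 1}) = 2 * n - 1"
    using gg_inj assms by (simp add: card_image)
  then show "vector_space.dim pscale (Bider n) = 2 * n - 1"
    using V.dim_unique[of "gg n ` {..<2 * n - 1}" "Bider n" "2 * n - 1"] gg_in gg_span gg_indep assms
    by blast
qed

end
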